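(* Let $x,y\in\mathbb{R}$ with $x^2+y^2=1$, let $0<\alpha\le1/2$, and let $x_0,y_0\in\mathbb{R}$ satisfy $|x-x_0|\le\alpha$ and $|y-y_0|\le\alpha$. Then $$|\phi(x,y)-\phi(x_0,y_0)|_{2\pi}\le\arcsin(\alpha)+\arcsin\Bigl(\frac{\alpha}{1-\alpha}\Bigr).$$
   Context: For $(u,v)\neq(0,0)$, $\phi(u,v)$ denotes the polar angle of the point $(u,v)$ (i.e. $u=r\cos\phi$, $v=r\sin\phi$ with $r>0$), defined modulo $2\pi$. For angles $a,b$, $|a-b|_{2\pi}=\min\bigl((a-b)\bmod 2\pi,\,(b-a)\bmod 2\pi\bigr)$. *)

theory Defs
  imports "HOL-Analysis.Analysis"
begin

text \<open>Polar angle of (u,v) \<noteq> (0,0), taking the representative in (-pi, pi];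
  it is only used modulo 2 pi via circ_dist, so the choice of representative is irrelevant.\<close>
definition polar_angle :: "real \<Rightarrow> real \<Rightarrow> real" where
  "polar_angle u v = Arg (Complex u v)"

definition real_modulo :: "real \<Rightarrow> real \<Rightarrow> real" where
  "real_modulo a m = a - m * of_int \<lfloor>a / m\<rfloor>"

definition circ_dist :: "real \<Rightarrow> real \<Rightarrow> real" where
  "circ_dist a b = min (real_modulo (a - b) (2*pi)) (real_modulo (b - a) (2*pi))"

end

theory Submission
  imports Defs
begin

lemma rm_small: "0 \<le> d \<Longrightarrow> d < 2*pi \<Longrightarrow> real_modulo d (2*pi) = d"
proof -
  assume a: "0 \<le> d" "d < 2*pi"
  have "\<lfloor>d/(2*pi)\<rfloor> = 0" using a pi_gt_zero by (simp add: floor_eq_iff)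
  thus ?thesis by (simp add: real_modulo_def)
qed

lemma rm_neg: "0 < d \<Longrightarrow> d < 2*pi \<Longrightarrow> real_modulo (-d) (2*pi) = 2*pi - d"
proof -
  assume a: "0 < d" "d < 2*pi"
  have "\<lfloor>-d/(2*pi)\<rfloor> = -1" using a pi_gt_zero by (simp add: floor_eq_iff)
  thus ?thesis by (simp add: real_modulo_def)
qed

lemma circ_bounds:
  assumes "\<bar>a - b\<bar> < 2*pi"
  shows "circ_dist a b \<le> \<bar>a - b\<bar> \<and> circ_dist a b \<le> 2*pi - \<bar>a - b\<bar>"
proof (cases "a - b = 0")
  case True
  then show ?thesis using pi_gt_zero by (simp add: circ_dist_def real_modulo_def)
next
  case False
  show ?thesis
  proof (cases "a - b > 0")
    case True
    have 1: "real_modulo (a-b) (2*pi) = a - b" using True assms by (intro rm_small) auto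
    have 2: "real_modulo (b-a) (2*pi) = 2*pi - (a - b)" using rm_neg[of "a-b"] True assms by auto
    show ?thesis using 1 2 True by (simp add: circ_dist_def)
  next
    case F: False
    have 1: "real_modulo (b-a) (2*pi) = b - a" using F False assms by (intro rm_small) auto
    have 2: "real_modulo (a-b) (2*pi) = 2*pi - (b - a)" using rm_neg[of "b-a"] F False assms by auto
    show ?thesis using 1 2 F False by (simp add: circ_dist_def)
  qed
qed

lemma circ_cos:
  assumes "-pi < a" "a \<le> pi" "-pi < b" "b \<le> pi" "0 \<le> \<beta>" "\<beta> \<le> pi"
    and "cos (a - b) \<ge> cos \<beta>"
  shows "circ_dist a b \<le> \<beta>"
proof -
  have lt: "\<bar>a - b\<bar> < 2*pi" using assms by auto
  have c: "cos \<bar>a - b\<bar> = cos (a - b)" using cos_minus[of "a-b"] by (simp add: abs_real_def)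
  show ?thesis
  proof (cases "\<bar>a - b\<bar> \<le> pi")
    case True
    have "cos \<beta> \<le> cos \<bar>a - b\<bar>" using assms(7) c by simp
    then have "\<bar>a - b\<bar> \<le> \<beta>" using cos_mono_le_eq[of \<beta> "\<bar>a - b\<bar>"] True assms(5,6) by simp
    then show ?thesis using circ_bounds[OF lt] by linarith
  next
    case False
    have c2: "cos (2*pi - \<bar>a - b\<bar>) = cos (a - b)" using c by (simp add: cos_diff)
    have "cos \<beta> \<le> cos (2*pi - \<bar>a - b\<bar>)" using assms(7) c2 by simp
    moreover have "0 \<le> 2*pi - \<bar>a - b\<bar>" "2*pi - \<bar>a - b\<bar> \<le> pi" using False lt by linarith+
    ultimately have "2*pi - \<bar>a - b\<bar> \<le> \<beta>" using cos_mono_le_eq[of \<beta> "2*pi - \<bar>a - b\<bar>"] assms(5,6) by simp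
    then show ?thesis using circ_bounds[OF lt] by linarith
  qed
qed

lemma alg:
  fixes x y x0 y0 \<alpha> :: real
  assumes "x\<^sup>2 + y\<^sup>2 = 1"
    and "0 < \<alpha>" and "\<alpha> \<le> 1/2"
    and "\<bar>x - x0\<bar> \<le> \<alpha>" and "\<bar>y - y0\<bar> \<le> \<alpha>"
  shows "x*x0 + y*y0 \<ge> (1 - 2*\<alpha>\<^sup>2) * sqrt (x0\<^sup>2 + y0\<^sup>2)" and "x0\<^sup>2 + y0\<^sup>2 > 0"
proof -
  define p where "p = x*x0 + y*y0"
  define N where "N = x0\<^sup>2 + y0\<^sup>2"
  have s: "(x0-x)\<^sup>2 + (y0-y)\<^sup>2 \<le> 2*\<alpha>\<^sup>2"
  proof -
    have "(x0-x)\<^sup>2 \<le> \<alpha>\<^sup>2" using assms(4) by (metis abs_le_square_iff abs_minus_commute abs_of_pos assms(2))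
    moreover have "(y0-y)\<^sup>2 \<le> \<alpha>\<^sup>2" using assms(5) by (metis abs_le_square_iff abs_minus_commute abs_of_pos assms(2))
    ultimately show ?thesis by linarith
  qed
  have e: "2*p - N = 1 - ((x0-x)\<^sup>2 + (y0-y)\<^sup>2)" using assms(1) unfolding p_def N_def by (simp add: power2_eq_square algebra_simps)
  have a2: "\<alpha>\<^sup>2 \<le> 1/4" 
  proof -
    have "\<alpha>\<^sup>2 \<le> (1/2)\<^sup>2" using assms(2,3) by (intro power_mono) auto
    thus ?thesis by (simp add: power2_eq_square)
  qed
  have q1: "2*p - N \<ge> 1 - 2*\<alpha>\<^sup>2" using e s by linarith
  have q2: "2*p - N \<le> 1" using e by (smt (verit) zero_le_power2)
  have q0: "1 - 2*\<alpha>\<^sup>2 \<ge> 1/2" using a2 by linarith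
  have id: "p\<^sup>2 = (2*p - N)*N + (p - N)\<^sup>2" by (simp add: power2_eq_square algebra_simps)
  have N0: "N \<ge> 0" unfolding N_def by simp
  have Npos: "N > 0"
  proof (rule ccontr)
    assume "\<not> N > 0"
    hence "N = 0" using N0 by simp
    hence "x0 = 0" "y0 = 0" unfolding N_def by (simp_all add: sum_power2_eq_zero_iff)
    hence "p = 0" unfolding p_def by simp
    thus False using q1 q0 \<open>N = 0\<close> by linarith
  qed
  have p0: "p \<ge> 0" using q1 q0 N0 by linarith
  have "sqrt (p\<^sup>2) \<ge> sqrt ((2*p - N)*N)" using id by (intro real_sqrt_le_mono) simp
  hence "p \<ge> sqrt (2*p - N) * sqrt N" using p0 by (simp add: real_sqrt_mult)
  moreover have "sqrt (2*p - N) \<ge> 2*p - N"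
  proof -
    have u0: "0 \<le> 2*p - N" using q0 q1 by linarith
    have "(2*p-N)*(2*p-N) \<le> (2*p-N)*1" by (rule mult_left_mono) (use q2 u0 in auto)
    hence "(2*p-N)\<^sup>2 \<le> 2*p-N" by (simp add: power2_eq_square)
    thus ?thesis by (rule real_le_rsqrt)
  qed
  hence "(2*p - N) * sqrt N \<le> sqrt (2*p - N) * sqrt N" by (rule mult_right_mono) (simp add: N0)
  ultimately have "p \<ge> (2*p - N) * sqrt N" by linarith
  moreover have "(2*p - N) * sqrt N \<ge> (1 - 2*\<alpha>\<^sup>2) * sqrt N" using q1 by (rule mult_right_mono) (simp add: N0)
  ultimately show "x*x0 + y*y0 \<ge> (1 - 2*\<alpha>\<^sup>2) * sqrt (x0\<^sup>2 + y0\<^sup>2)" unfolding p_def N_def by linarith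
  show "x0\<^sup>2 + y0\<^sup>2 > 0" using Npos N_def by simp
qed

lemma cos_sin_Arg: "cmod z * cos (Arg z) = Re z" "cmod z * sin (Arg z) = Im z"
proof -
  show "cmod z * cos (Arg z) = Re z"
    by (cases "z = 0", simp) (metis Arg_eq Re_exp exp_Ln norm_exp_eq_Re Arg_def)
  show "cmod z * sin (Arg z) = Im z"
    by (cases "z = 0", simp) (metis Arg_eq Im_exp exp_Ln norm_exp_eq_Re Arg_def)
qed

theorem theorem5p1:
  fixes x y x0 y0 \<alpha> :: real
  assumes "x\<^sup>2 + y\<^sup>2 = 1"
    and "0 < \<alpha>" and "\<alpha> \<le> 1/2"
    and "\<bar>x - x0\<bar> \<le> \<alpha>" and "\<bar>y - y0\<bar> \<le> \<alpha>"
  shows "circ_dist (polar_angle x y) (polar_angle x0 y0) \<le> arcsin \<alpha> + arcsin (\<alpha> / (1 - \<alpha>))"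
proof -
  define z where "z = Complex x y"
  define w where "w = Complex x0 y0"
  have nz: "cmod z = 1" using assms(1) unfolding z_def by (simp add: cmod_def)
  have nw: "cmod w = sqrt (x0\<^sup>2 + y0\<^sup>2)" unfolding w_def by (simp add: cmod_def)
  note A = alg[OF assms]
  have nwp: "cmod w > 0" using nw A(2) by simp
  have cz: "cos (Arg z) = x" "sin (Arg z) = y" using cos_sin_Arg[of z] nz unfolding z_def by simp_all
  have cw: "cmod w * cos (Arg w) = x0" "cmod w * sin (Arg w) = y0" using cos_sin_Arg[of w] unfolding w_def by simp_all
  have "cmod w * cos (Arg z - Arg w) = x*x0 + y*y0"
    using cz cw by (simp add: cos_diff algebra_simps)
  hence "cmod w * cos (Arg z - Arg w) \<ge> cmod w * (1 - 2*\<alpha>\<^sup>2)" using A(1) nw by (simp add: mult.commute)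
  hence c1: "cos (Arg z - Arg w) \<ge> 1 - 2*\<alpha>\<^sup>2" using nwp by simp
  define \<beta> where "\<beta> = 2 * arcsin \<alpha>"
  have ab: "0 \<le> arcsin \<alpha>" "arcsin \<alpha> \<le> pi/2" using assms(2,3) arcsin_bounded[of \<alpha>] arcsin_nonneg[of \<alpha>] by auto
  have cb: "cos \<beta> = 1 - 2*\<alpha>\<^sup>2" unfolding \<beta>_def using assms(2,3) by (simp add: cos_double_sin)
  have "circ_dist (Arg z) (Arg w) \<le> \<beta>"
    using circ_cos[of "Arg z" "Arg w" \<beta>] mpi_less_Arg Arg_le_pi ab c1 cb unfolding \<beta>_def by auto
  moreover have "arcsin \<alpha> \<le> arcsin (\<alpha> / (1 - \<alpha>))"
  proof (rule arcsin_le_arcsin)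
    show "-1 \<le> \<alpha>" using assms by simp
    show "\<alpha> \<le> \<alpha> / (1 - \<alpha>)" using assms by (simp add: le_divide_eq mult_le_cancel_left1)
    show "\<alpha> / (1 - \<alpha>) \<le> 1" using assms by (simp add: divide_le_eq)
  qed
  ultimately show ?thesis unfolding polar_angle_def \<beta>_def z_def w_def by linarith
qed

end
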